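(* For every $n\geq 1$, the Fibonacci-sum set-graph $G^F_{A^{(n)}}$ is Eulerian.
   Context: Let $\mathcal{F}=\{f_m\}_{m\ge 0}$ be the Fibonacci numbers, $f_0=0$, $f_1=1$, $f_m=f_{m-1}+f_{m-2}$. The Fibonacci-sum set-graph $G^F_{A^{(n)}}$ is the multigraph (loops and multiple edges allowed) whose vertices are in bijection with the nonempty subsets of $A^{(n)}=\{1,\dots,n\}$; between the vertices corresponding to distinct subsets $S,T$ there is one edge for each pair $(i',j')$ with $i'\in S$, $j'\in T$, $i'\neq j'$ and $i'+j'\in\mathcal{F}$, and at the vertex corresponding to $S$ there is one loop for each pair of distinct elements $i',j'\in S$ with $i'+j'\in\mathcal{F}$. *)

theory Defs
  imports "HOL-Number_Theory.Fib"
begin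

definition fsg_vertices :: "nat \<Rightarrow> nat set set" where
  "fsg_vertices n = {S. S \<subseteq> {1..n} \<and> S \<noteq> {}}"

text \<open>An edge is an unordered pair of
  half-edges (vertex, element). Between distinct vertices S, T the edge for the pair
  (i', j') with i' in S, j' in T is {(S,i'),(T,j')}; a loop at S for the unordered pair
  of distinct elements i', j' of S is {(S,i'),(S,j')}.\<close>
definition fsg_edges :: "nat \<Rightarrow> (nat set \<times> nat) set set" where
  "fsg_edges n = {{(S, i), (T, j)} | S T i j.
      S \<in> fsg_vertices n \<and> T \<in> fsg_vertices n \<and> i \<in> S \<and> j \<in> T \<and> i \<noteq> j
      \<and> i + j \<in> range fib}"

definition edge_ends :: "('v \<times> 'l) set \<Rightarrow> 'v set" where
  "edge_ends e = fst ` e"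

definition eulerian :: "'v set \<Rightarrow> 'e set \<Rightarrow> ('e \<Rightarrow> 'v set) \<Rightarrow> bool" where
  "eulerian V E ends \<longleftrightarrow> (\<exists>es vs.
      distinct es \<and> set es = E \<and> length vs = Suc (length es) \<and> set vs \<subseteq> V \<and>
      hd vs = last vs \<and>
      (\<forall>k < length es. ends (es ! k) = {vs ! k, vs ! Suc k}))"

end

theory Submission
  imports Defs
begin


fun walk :: "'v set \<Rightarrow> 'v list \<Rightarrow> ('v \<times> 'l) set list \<Rightarrow> bool" where
  "walk V [v] [] = (v \<in> V)"
| "walk V (v # w # vs) (e # es) = (v \<in> V \<and> fst ` e = {v, w} \<and> walk V (w # vs) es)"
| "walk V _ _ = False"

definition wt :: "('v \<times> 'l) set \<Rightarrow> 'v \<Rightarrow> nat" where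
  "wt e x = card {h \<in> e. fst h = x}"

lemma walk_nonempty: "walk V p a \<Longrightarrow> p \<noteq> []"
  by (induction V p a rule: walk.induct) auto

lemma walk_props:
  "walk V vs es \<Longrightarrow> length vs = Suc (length es) \<and> set vs \<subseteq> V \<and>
     (\<forall>e\<in>set es. fst ` e \<subseteq> set vs) \<and>
     (\<forall>k < length es. fst ` (es ! k) = {vs ! k, vs ! Suc k})"
proof (induction V vs es rule: walk.induct)
  case (2 V v w vs e es)
  then have A: "length (v#w#vs) = Suc (length (e#es)) \<and> set (v#w#vs) \<subseteq> V" by auto
  have B: "\<forall>e'\<in>set (e#es). fst ` e' \<subseteq> set (v#w#vs)"
  proof
    fix e' assume "e' \<in> set (e#es)"
    then show "fst ` e' \<subseteq> set (v#w#vs)"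
    proof (cases "e' = e")
      case True then show ?thesis using 2 by auto
    next
      case False then have "e' \<in> set es" using \<open>e' \<in> set (e#es)\<close> by auto then have "fst ` e' \<subseteq> set (w#vs)" using 2 by auto
      then show ?thesis by auto
    qed
  qed
  have C: "\<forall>k < length (e#es). fst ` ((e#es) ! k) = {(v#w#vs) ! k, (v#w#vs) ! Suc k}"
  proof (intro allI impI)
    fix k assume "k < length (e#es)"
    then show "fst ` ((e#es) ! k) = {(v#w#vs) ! k, (v#w#vs) ! Suc k}"
      using 2 by (cases k) auto
  qed
  show ?case using A B C by blast
qed auto

lemma walk_concat:
  "walk V p a \<Longrightarrow> walk V q b \<Longrightarrow> last p = hd q \<Longrightarrow> walk V (p @ tl q) (a @ b)"
proof (induction V p a rule: walk.induct)
  case (1 V v)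
  then show ?case using walk_nonempty[of V q b] by (cases q) auto
next
  case (2 V v w vs e es)
  then show ?case by auto
qed auto

lemma walk_split:
  "walk V vs es \<Longrightarrow> x \<in> set vs \<Longrightarrow> \<exists>p q a b. walk V p a \<and> walk V q b \<and> es = a @ b
     \<and> last p = x \<and> hd q = x \<and> vs = p @ tl q"
proof (induction V vs es rule: walk.induct)
  case (1 V v)
  then show ?case by (rule_tac x="[v]" in exI, rule_tac x="[v]" in exI) auto
next
  case (2 V v w vs e es)
  show ?case
  proof (cases "x = v")
    case True
    then show ?thesis using 2
      by (rule_tac x="[v]" in exI, rule_tac x="v # w # vs" in exI,
          rule_tac x="[]" in exI, rule_tac x="e # es" in exI) auto
  next
    case False
    with 2 obtain p q a b where h: "walk V p a" "walk V q b" "es = a @ b" "last p = x"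
      "hd q = x" "w # vs = p @ tl q" by auto
    from h(1) have "p \<noteq> []" by (rule walk_nonempty)
    then obtain p' where pp: "p = w # p'" using h(6) by (cases p) auto
    show ?thesis using 2 h pp
      by (rule_tac x="v # p" in exI, rule_tac x="q" in exI,
          rule_tac x="e # a" in exI, rule_tac x="b" in exI) auto
  qed
qed auto

lemma card_filter2: "h1 \<noteq> h2 \<Longrightarrow> card {h \<in> {h1, h2}. P h} = (if P h1 then 1 else 0) + (if P h2 then 1 else 0)"
proof -
  assume ne: "h1 \<noteq> h2"
  show ?thesis
  proof (cases "P h1"; cases "P h2")
    assume "P h1" "P h2" then have "{h \<in> {h1, h2}. P h} = {h1, h2}" by auto
    then show ?thesis using ne \<open>P h1\<close> \<open>P h2\<close> by simp
  next
    assume "P h1" "\<not> P h2" then have "{h \<in> {h1, h2}. P h} = {h1}" by auto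
    then show ?thesis using \<open>P h1\<close> \<open>\<not> P h2\<close> by simp
  next
    assume "\<not> P h1" "P h2" then have "{h \<in> {h1, h2}. P h} = {h2}" by auto
    then show ?thesis using \<open>\<not> P h1\<close> \<open>P h2\<close> by simp
  next
    assume "\<not> P h1" "\<not> P h2" then have "{h \<in> {h1, h2}. P h} = {}" by auto
    then show ?thesis using \<open>\<not> P h1\<close> \<open>\<not> P h2\<close> by simp
  qed
qed

lemma wt_ends:
  assumes "card e = 2" "fst ` e = {v, w}"
  shows "wt e x = (if v = w then (if x = v then 2 else 0)
          else (if x = v then 1 else 0) + (if x = w then 1 else 0))"
proof -
  obtain h1 h2 where e: "e = {h1, h2}" "h1 \<noteq> h2" using assms(1) card_2_iff by metis
  have F: "{fst h1, fst h2} = {v, w}" using assms(2) e(1) by simp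
  show ?thesis
  proof (cases "v = w")
    case True
    have "fst h1 \<in> {v, w}" "fst h2 \<in> {v, w}" using F by blast+
    then have "fst h1 = v" "fst h2 = v" using True by simp_all
    show ?thesis
    proof (cases "x = v")
      case True
      have E: "{h \<in> e. fst h = x} = e" using e \<open>fst h1 = v\<close> \<open>fst h2 = v\<close> True by auto
      show ?thesis using assms(1) \<open>v = w\<close> True unfolding wt_def E by simp
    next
      case False
      have E: "{h \<in> e. fst h = x} = {}" using e \<open>fst h1 = v\<close> \<open>fst h2 = v\<close> False by auto
      show ?thesis using \<open>v = w\<close> False unfolding wt_def E by simp
    qed
  next
    case False
    then have "(fst h1 = v \<and> fst h2 = w) \<or> (fst h1 = w \<and> fst h2 = v)"
      using F by (simp add: doubleton_eq_iff)
    moreover have W: "wt e x = (if fst h1 = x then 1 else 0) + (if fst h2 = x then 1 else 0)"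
      unfolding wt_def e(1) card_filter2[OF e(2)] by simp
    ultimately show ?thesis using False
    proof (elim disjE conjE)
      assume "fst h1 = v" "fst h2 = w" then show ?thesis using W False by simp
    next
      assume "fst h1 = w" "fst h2 = v" then show ?thesis using W False by simp
    qed
  qed
qed

lemma walk_parity:
  "walk V vs es \<Longrightarrow> (\<forall>e\<in>set es. card e = 2) \<Longrightarrow>
    even (sum_list (map (\<lambda>e. wt e x) es) + (if x = hd vs then 1 else 0) + (if x = last vs then 1 else 0))"
proof (induction V vs es rule: walk.induct)
  case (2 V v w vs e es)
  then have IH: "even (sum_list (map (\<lambda>e. wt e x) es) + (if x = w then 1 else 0) + (if x = last (w#vs) then 1 else 0))"
    by auto
  have w: "wt e x = (if v = w then (if x = v then 2 else 0)
          else (if x = v then 1 else 0) + (if x = w then 1 else 0))"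
    using 2 by (intro wt_ends) auto
  show ?case using IH w by (auto split: if_splits)
qed auto

lemma wt_pos: "wt e x \<noteq> 0 \<Longrightarrow> x \<in> fst ` e"
  unfolding wt_def by (metis (mono_tags, lifting) card.empty empty_Collect_eq image_eqI)

lemma euler_gen:
  fixes V :: "'v set" and E :: "('v \<times> 'l) set set" and c :: 'v
  assumes finE: "finite E" and card2: "\<forall>e\<in>E. card e = 2" and endsV: "\<forall>e\<in>E. fst ` e \<subseteq> V"
    and evn: "\<forall>x. even (\<Sum>e\<in>E. wt e x)" and cV: "c \<in> V"
    and hub: "\<forall>v\<in>V. v \<noteq> c \<longrightarrow> (\<exists>e\<in>E. fst ` e = {v, c})"
  shows "\<exists>es vs. distinct es \<and> set es = E \<and> length vs = Suc (length es) \<and> set vs \<subseteq> V \<and>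
      hd vs = last vs \<and> (\<forall>k < length es. fst ` (es ! k) = {vs ! k, vs ! Suc k})"
proof -
  define T where "T vs es \<longleftrightarrow> walk V vs es \<and> distinct es \<and> set es \<subseteq> E" for vs es
  have T0: "T [c] []" unfolding T_def using cV by simp
  have bound: "length es \<le> card E" if "T vs es" for vs es
  proof -
    have "length es = card (set es)" using that unfolding T_def by (simp add: distinct_card)
    also have "\<dots> \<le> card E" using that finE unfolding T_def by (simp add: card_mono)
    finally show ?thesis .
  qed
  have P0: "\<exists>vs es. T vs es \<and> length es = 0" using T0 by auto
  have Pb: "\<forall>k. (\<exists>vs es. T vs es \<and> length es = k) \<longrightarrow> k \<le> card E" using bound by blast
  obtain m where m1: "\<exists>vs es. T vs es \<and> length es = m"
    and m2: "\<forall>k. (\<exists>vs es. T vs es \<and> length es = k) \<longrightarrow> k \<le> m"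
    using Nat.ex_has_greatest_nat[OF P0 Pb] by blast
  obtain vs es where Tvs: "T vs es" and len: "length es = m" using m1 by blast
  have W: "walk V vs es" and D: "distinct es" and S: "set es \<subseteq> E" using Tvs unfolding T_def by auto
  have prepend: "\<exists>vs''. T vs'' (e # es')"
    if "T vs' es'" "hd vs' = x" "e \<in> E" "e \<notin> set es'" "x \<in> fst ` e" for vs' es' x e
  proof -
    obtain h1 h2 where e: "e = {h1, h2}" using card2 \<open>e \<in> E\<close> card_2_iff by metis
    have Fe: "fst ` e = {fst h1, fst h2}" using e by simp
    obtain y where y: "fst ` e = {y, x}"
    proof (cases "fst h1 = x")
      case True then show ?thesis using that(1)[of "fst h2"] Fe by auto
    next
      case False then have "fst h2 = x" using Fe \<open>x \<in> fst ` e\<close> by auto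
      then show ?thesis using that(1)[of "fst h1"] Fe by auto
    qed
    have yV: "y \<in> V" using endsV \<open>e \<in> E\<close> y by auto
    have "vs' \<noteq> []" using \<open>T vs' es'\<close> walk_nonempty unfolding T_def by blast
    then obtain r where r: "vs' = x # r" using \<open>hd vs' = x\<close> by (cases vs') auto
    have "walk V (y # x # r) (e # es')" using yV y \<open>T vs' es'\<close> r unfolding T_def by simp
    then have "T (y # vs') (e # es')" using that r unfolding T_def by simp
    then show ?thesis by blast
  qed
  have closed: "hd vs = last vs"
  proof (rule ccontr)
    assume ne: "hd vs \<noteq> last vs"
    define x where "x = hd vs"
    have c2: "\<forall>e\<in>set es. card e = 2" using S card2 by auto
    have par: "even (sum_list (map (\<lambda>e. wt e x) es) + 1)"
      using walk_parity[OF W c2, of x] ne unfolding x_def by simp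
    have dl: "sum_list (map (\<lambda>e. wt e x) es) = (\<Sum>e\<in>set es. wt e x)"
      using D by (simp add: sum.distinct_set_conv_list)
    have tot: "(\<Sum>e\<in>E. wt e x) = (\<Sum>e\<in>E - set es. wt e x) + (\<Sum>e\<in>set es. wt e x)"
      using finE S by (simp add: sum.subset_diff)
    have "even (\<Sum>e\<in>E. wt e x)" using evn by blast
    then have "odd (\<Sum>e\<in>E - set es. wt e x)" using par dl tot by (metis even_add odd_one)
    then have "(\<Sum>e\<in>E - set es. wt e x) \<noteq> 0" by (metis even_zero)
    have "\<exists>e\<in>E - set es. wt e x \<noteq> 0"
    proof (rule ccontr)
      assume "\<not> (\<exists>e\<in>E - set es. wt e x \<noteq> 0)"
      then have "\<forall>e\<in>E - set es. wt e x = 0" by blast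
      then have "(\<Sum>e\<in>E - set es. wt e x) = 0" by simp
      then show False using \<open>(\<Sum>e\<in>E - set es. wt e x) \<noteq> 0\<close> by simp
    qed
    then obtain e where e: "e \<in> E" "e \<notin> set es" "wt e x \<noteq> 0" by blast
    have "x \<in> fst ` e" using e(3) by (rule wt_pos)
    then obtain vs'' where "T vs'' (e # es)"
      using prepend[OF Tvs x_def[symmetric] e(1) e(2)] by blast
    then have "length (e # es) \<le> m" using m2 by blast
    then show False using len by simp
  qed
  have cover: "set es = E"
  proof (rule ccontr)
    assume nc: "set es \<noteq> E"
    have used: "fst ` e \<subseteq> set vs" if "e \<in> set es" for e using walk_props[OF W] that by blast
    have vsV: "set vs \<subseteq> V" using walk_props[OF W] by blast
    obtain x e where xe: "x \<in> set vs" "e \<in> E" "e \<notin> set es" "x \<in> fst ` e"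
    proof (cases "c \<in> set vs")
      case True
      obtain e0 where e0: "e0 \<in> E" "e0 \<notin> set es" using nc S by blast
      have "e0 \<noteq> {}" using card2 e0 by (metis card.empty zero_neq_numeral)
      then obtain v where v: "v \<in> fst ` e0" by blast
      show ?thesis
      proof (cases "v \<in> set vs")
        case True then show ?thesis using that e0 v by blast
      next
        case False
        have "v \<in> V" using endsV e0 v by blast
        moreover have "v \<noteq> c" using False \<open>c \<in> set vs\<close> by blast
        ultimately obtain e' where e': "e' \<in> E" "fst ` e' = {v, c}" using hub by blast
        have "e' \<notin> set es" using used e' False by blast
        then show ?thesis using that[of c e'] e' \<open>c \<in> set vs\<close> by blast
      qed
    next
      case False
      have "vs \<noteq> []" using walk_nonempty W by blast
      then have hv: "hd vs \<in> set vs" by simp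
      then have "hd vs \<in> V" "hd vs \<noteq> c" using vsV False by auto
      then obtain e' where e': "e' \<in> E" "fst ` e' = {hd vs, c}" using hub by blast
      have "e' \<notin> set es" using used e' False by blast
      then show ?thesis using that[of "hd vs" e'] e' hv by blast
    qed
    obtain p q a b where pq: "walk V p a" "walk V q b" "es = a @ b" "last p = x" "hd q = x"
      "vs = p @ tl q" using walk_split[OF W xe(1)] by blast
    have pne: "p \<noteq> []" using walk_nonempty pq(1) by blast
    have qne: "q \<noteq> []" using walk_nonempty pq(2) by blast
    have hp: "hd p = hd vs" using pq(6) pne by (cases p) auto
    have lq: "last q = last vs"
    proof (cases "tl q = []")
      case True
      then have "q = [hd q]" using qne by (cases q) auto
      then show ?thesis using True pq by (metis append_Nil2 last_ConsL)
    next
      case False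
      then show ?thesis using pq(6) qne by (cases q) auto
    qed
    have rw: "walk V (q @ tl p) (b @ a)"
      using walk_concat[OF pq(2) pq(1)] lq hp closed by simp
    have "T (q @ tl p) (b @ a)" using rw D S pq(3) unfolding T_def by auto
    moreover have "hd (q @ tl p) = x" using qne pq(5) by simp
    moreover have "e \<notin> set (b @ a)" using xe pq(3) by auto
    ultimately obtain vs'' where "T vs'' (e # b @ a)"
      using prepend xe by blast
    then have "length (e # b @ a) \<le> m" using m2 by blast
    then show False using len pq(3) by simp
  qed
  show ?thesis using D cover walk_props[OF W] closed by blast
qed


lemma fib_bracket: "2 \<le> i \<Longrightarrow> \<exists>k. 3 \<le> k \<and> fib k \<le> i \<and> i < fib (Suc k)"
proof (induction i rule: nat_induct_at_least)
  case base
  show ?case by (rule exI[of _ 3]) (simp add: numeral_eq_Suc)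
next
  case (Suc i)
  then obtain k where k: "3 \<le> k" "fib k \<le> i" "i < fib (Suc k)" by blast
  show ?case
  proof (cases "Suc i < fib (Suc k)")
    case True then show ?thesis using k by (intro exI[of _ k]) auto
  next
    case False
    then have eq: "Suc i = fib (Suc k)" using k by simp
    obtain m where m: "k = Suc m" using k by (cases k) auto
    have "0 < fib k" using k fib_neq_0_nat by simp
    then have "fib (Suc k) < fib (Suc (Suc k))" using m by simp
    then show ?thesis using eq k by (intro exI[of _ "Suc k"]) auto
  qed
qed

lemma fib_partner:
  assumes "1 \<le> i" "i \<le> n" "2 \<le> n"
  shows "\<exists>j. 1 \<le> j \<and> j \<le> n \<and> j \<noteq> i \<and> i + j \<in> range fib"
proof (cases "i = 1")
  case True
  have e4: "(1::nat) + 2 = fib 4" by (simp add: numeral_eq_Suc)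
  have "(1::nat) + 2 \<in> range fib" unfolding e4 by (rule rangeI)
  then show ?thesis using True assms by (intro exI[of _ 2]) auto
next
  case False
  then have "2 \<le> i" using assms by simp
  then obtain k where k: "3 \<le> k" "fib k \<le> i" "i < fib (Suc k)" using fib_bracket by blast
  define m where "m = k - 2"
  have m: "k = Suc (Suc m)" using k unfolding m_def by simp
  have "0 < fib m" using k m fib_neq_0_nat by simp
  then have lt: "fib (Suc k) < 2 * fib k" using m by simp
  define j where "j = fib (Suc k) - i"
  have "1 \<le> j" "j < i" "i + j = fib (Suc k)" using k lt unfolding j_def by auto
  then show ?thesis using assms by (intro exI[of _ j]) auto
qed

lemma card_containing_even:
  assumes "finite A" "i \<in> A" "j \<in> A" "i \<noteq> j"
  shows "even (card {T. T \<subseteq> A \<and> T \<noteq> {} \<and> j \<in> T})"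
proof -
  have eq: "{T. T \<subseteq> A \<and> T \<noteq> {} \<and> j \<in> T} = insert j ` Pow (A - {j})"
  proof
    show "{T. T \<subseteq> A \<and> T \<noteq> {} \<and> j \<in> T} \<subseteq> insert j ` Pow (A - {j})"
    proof
      fix T assume "T \<in> {T. T \<subseteq> A \<and> T \<noteq> {} \<and> j \<in> T}"
      then have "T = insert j (T - {j})" "T - {j} \<in> Pow (A - {j})" by auto
      then show "T \<in> insert j ` Pow (A - {j})" by blast
    qed
  next
    show "insert j ` Pow (A - {j}) \<subseteq> {T. T \<subseteq> A \<and> T \<noteq> {} \<and> j \<in> T}" using assms by auto
  qed
  have inj: "inj_on (insert j) (Pow (A - {j}))"
  proof (rule inj_onI)
    fix X Y assume X: "X \<in> Pow (A - {j})" and Y: "Y \<in> Pow (A - {j})" and eq: "insert j X = insert j Y"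
    have "j \<notin> X" "j \<notin> Y" using X Y by auto
    then have "X = insert j X - {j}" "Y = insert j Y - {j}" by auto
    then show "X = Y" using eq by simp
  qed
  have "card (insert j ` Pow (A - {j})) = 2 ^ card (A - {j})"
    using card_image[OF inj] assms(1) by (simp add: card_Pow)
  moreover have "card (A - {j}) \<noteq> 0"
  proof -
    have "A - {j} \<noteq> {}" using assms by auto
    then show ?thesis using assms(1) by simp
  qed
  ultimately show ?thesis unfolding eq by simp
qed

lemma fsg_finite_V: "finite (fsg_vertices n)"
  unfolding fsg_vertices_def by (rule finite_subset[of _ "Pow {1..n}"]) auto

lemma fsg_finite_E: "finite (fsg_edges n)"
proof -
  have "fsg_edges n \<subseteq> (\<lambda>(S, T, i, j). {(S, i), (T, j)}) ` (fsg_vertices n \<times> fsg_vertices n \<times> {1..n} \<times> {1..n})"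
  proof
    fix e assume "e \<in> fsg_edges n"
    then obtain S T i j where e: "e = {(S, i), (T, j)}" "S \<in> fsg_vertices n" "T \<in> fsg_vertices n"
      "i \<in> S" "j \<in> T" unfolding fsg_edges_def by blast
    have "S \<subseteq> {1..n}" "T \<subseteq> {1..n}" using e(2) e(3) unfolding fsg_vertices_def by auto
    then have "i \<in> {1..n}" "j \<in> {1..n}" using e(4) e(5) by blast+
    then have mem: "(S, T, i, j) \<in> fsg_vertices n \<times> fsg_vertices n \<times> {1..n} \<times> {1..n}" using e(2) e(3) by simp
    show "e \<in> (\<lambda>(S, T, i, j). {(S, i), (T, j)}) ` (fsg_vertices n \<times> fsg_vertices n \<times> {1..n} \<times> {1..n})"
    proof (rule image_eqI[where x="(S, T, i, j)"])
      show "e = (\<lambda>(S, T, i, j). {(S, i), (T, j)}) (S, T, i, j)" using e(1) by simp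
    qed (rule mem)
  qed
  moreover have "finite ((\<lambda>(S, T, i, j). {(S, i), (T, j)}) ` (fsg_vertices n \<times> fsg_vertices n \<times> {1..n} \<times> {1..n}))"
    using fsg_finite_V[of n] by simp
  ultimately show ?thesis by (rule finite_subset)
qed

lemma fsg_edge_card:
  assumes "e \<in> fsg_edges n" shows "card e = 2"
proof -
  obtain S T i j where e: "e = {(S, i), (T, j)}" "i \<noteq> j" using assms unfolding fsg_edges_def by blast
  then have "(S, i) \<noteq> (T, j)" by simp
  then show ?thesis using e(1) by simp
qed

lemma fsg_edge_ends:
  assumes "e \<in> fsg_edges n" shows "fst ` e \<subseteq> fsg_vertices n"
proof -
  obtain S T i j where e: "e = {(S, i), (T, j)}" "S \<in> fsg_vertices n" "T \<in> fsg_vertices n"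
    using assms unfolding fsg_edges_def by blast
  then show ?thesis by simp
qed

lemma fsg_sum_even: "even (\<Sum>e\<in>fsg_edges n. wt e x)"
proof -
  let ?E = "fsg_edges n" and ?V = "fsg_vertices n"
  define B where "B e = {h \<in> e. fst h = x}" for e :: "(nat set \<times> nat) set"
  define P where "P = {(i, j). x \<in> ?V \<and> i \<in> x \<and> j \<in> {1..n} \<and> i \<noteq> j \<and> i + j \<in> range fib}"
  define C where "C p = {T \<in> ?V. snd p \<in> T}" for p :: "nat \<times> nat"
  define g where "g q = ({(x, fst (fst q)), (snd q, snd (fst q))}, (x, fst (fst q)))"
    for q :: "(nat \<times> nat) \<times> nat set"
  have finB: "\<forall>e\<in>?E. finite (B e)"
  proof
    fix e assume "e \<in> ?E"
    then have "card e = 2" by (rule fsg_edge_card)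
    then have "finite e" by (simp add: card_ge_0_finite)
    then show "finite (B e)" unfolding B_def by simp
  qed
  have s1: "(\<Sum>e\<in>?E. wt e x) = card (Sigma ?E B)"
    using card_SigmaI[OF fsg_finite_E finB] unfolding wt_def B_def by simp
  have finP: "finite P"
    by (rule finite_subset[of _ "{1..n} \<times> {1..n}"]) (auto simp: P_def fsg_vertices_def)
  have finC: "\<forall>p\<in>P. finite (C p)" using fsg_finite_V unfolding C_def by auto
  have inj: "inj_on g (Sigma P C)"
  proof (rule inj_onI)
    fix q q' assume q: "q \<in> Sigma P C" and q': "q' \<in> Sigma P C" and eq: "g q = g q'"
    obtain i j T where qq: "q = ((i, j), T)" by (metis prod.collapse)
    obtain i' j' T' where qq': "q' = ((i', j'), T')" by (metis prod.collapse)
    have ij: "i \<noteq> j" using q qq unfolding P_def by auto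
    from eq have eq2: "({(x, i), (T, j)}, (x, i)) = ({(x, i'), (T', j')}, (x, i'))" unfolding g_def qq qq' by (simp only: fst_conv snd_conv)
    then have "i = i'" by simp
    moreover from eq2 have "{(x, i), (T, j)} = {(x, i'), (T', j')}" by (metis prod.inject)
    ultimately have "(T, j) = (T', j')" using ij by (auto simp: doubleton_eq_iff)
    then show "q = q'" using qq qq' \<open>i = i'\<close> by simp
  qed
  have img: "g ` Sigma P C = Sigma ?E B"
  proof
    show "g ` Sigma P C \<subseteq> Sigma ?E B"
    proof
      fix z assume "z \<in> g ` Sigma P C"
      then obtain q where q: "q \<in> Sigma P C" "z = g q" by blast
      obtain i j T where qq: "q = ((i, j), T)" by (metis prod.collapse)
      have z: "z = g ((i, j), T)" "(i, j) \<in> P" "T \<in> C (i, j)" using q qq by auto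
      have zz: "x \<in> ?V" "T \<in> ?V" "i \<in> x" "j \<in> T" "i \<noteq> j" "i + j \<in> range fib"
        using z unfolding P_def C_def by auto
      have "{(x, i), (T, j)} \<in> ?E" unfolding fsg_edges_def
        by (rule CollectI, rule exI[of _ x], rule exI[of _ T], rule exI[of _ i], rule exI[of _ j])
          (use zz in simp)
      then show "z \<in> Sigma ?E B" using z unfolding g_def B_def by simp
    qed
  next
    show "Sigma ?E B \<subseteq> g ` Sigma P C"
    proof
      fix z assume "z \<in> Sigma ?E B"
      then obtain e h where z: "z = (e, h)" "e \<in> ?E" "h \<in> e" "fst h = x" unfolding B_def by blast
      then obtain S T i j where e: "e = {(S, i), (T, j)}" "S \<in> ?V" "T \<in> ?V" "i \<in> S" "j \<in> T"
        "i \<noteq> j" "i + j \<in> range fib" unfolding fsg_edges_def by blast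
      have sub: "S \<subseteq> {1..n}" "T \<subseteq> {1..n}" using e unfolding fsg_vertices_def by auto
      show "z \<in> g ` Sigma P C"
      proof (cases "h = (S, i)")
        case True
        then have "S = x" using z by simp
        have jn: "j \<in> {1..n}" using e(5) sub(2) by blast
        have "(i, j) \<in> P" unfolding P_def using e(2) e(4) e(6) e(7) jn \<open>S = x\<close> by simp
        moreover have "T \<in> C (i, j)" unfolding C_def using e(3) e(5) by simp
        ultimately have "((i, j), T) \<in> Sigma P C" by simp
        moreover have "g ((i, j), T) = z" using z(1) e(1) True \<open>S = x\<close> unfolding g_def by simp
        ultimately show ?thesis by (metis image_eqI)
      next
        case False
        then have "h = (T, j)" using z e by auto
        then have "T = x" using z by simp
        have "j + i \<in> range fib" using e by (simp add: add.commute)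
        have jn: "i \<in> {1..n}" using e(4) sub(1) by blast
        have "(j, i) \<in> P" unfolding P_def using e(3) e(5) e(6) jn \<open>T = x\<close> \<open>j + i \<in> range fib\<close> by auto
        moreover have "S \<in> C (j, i)" unfolding C_def using e(2) e(4) by simp
        ultimately have "((j, i), S) \<in> Sigma P C" by simp
        moreover have "g ((j, i), S) = z" using z(1) e(1) \<open>h = (T, j)\<close> \<open>T = x\<close> unfolding g_def
          by (simp add: insert_commute)
        ultimately show ?thesis by (metis image_eqI)
      qed
    qed
  qed
  have "card (Sigma ?E B) = card (Sigma P C)" using card_image[OF inj] img by simp
  also have "\<dots> = (\<Sum>p\<in>P. card (C p))" using card_SigmaI[OF finP finC] .
  finally have s2: "(\<Sum>e\<in>?E. wt e x) = (\<Sum>p\<in>P. card (C p))" using s1 by simp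
  have "\<forall>p\<in>P. even (card (C p))"
  proof
    fix p assume "p \<in> P"
    then obtain i j where p: "p = (i, j)" "x \<in> ?V" "i \<in> x" "j \<in> {1..n}" "i \<noteq> j"
      unfolding P_def by blast
    have "i \<in> {1..n}" using p unfolding fsg_vertices_def by auto
    have "C p = {T. T \<subseteq> {1..n} \<and> T \<noteq> {} \<and> j \<in> T}" unfolding C_def p fsg_vertices_def by auto
    then show "even (card (C p))" using card_containing_even[of "{1..n}" i j] p \<open>i \<in> {1..n}\<close> by simp
  qed
  then have "even (\<Sum>p\<in>P. card (C p))" by (simp add: dvd_sum)
  then show ?thesis using s2 by simp
qed

lemma fsg_hub:
  assumes "v \<in> fsg_vertices n" "v \<noteq> {1..n}"
  shows "\<exists>e\<in>fsg_edges n. fst ` e = {v, {1..n}}"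
proof -
  have sub: "v \<subseteq> {1..n}" "v \<noteq> {}" using assms(1) unfolding fsg_vertices_def by auto
  then obtain i where i: "i \<in> v" by blast
  have "2 \<le> n"
  proof (rule ccontr)
    assume "\<not> 2 \<le> n"
    have "n \<noteq> 0" using sub by auto
    then have n1: "n = 1" using \<open>\<not> 2 \<le> n\<close> by simp
    then have "v \<subseteq> {1}" using sub by simp
    then have "v = {1}" using sub(2) subset_singletonD by blast
    then have "v = {1..n}" using n1 by simp
    then show False using assms(2) by simp
  qed
  moreover have "1 \<le> i" "i \<le> n" using i sub by auto
  ultimately obtain j where j: "1 \<le> j" "j \<le> n" "j \<noteq> i" "i + j \<in> range fib"
    using fib_partner by blast
  have cV: "{1..n} \<in> fsg_vertices n" using \<open>2 \<le> n\<close> unfolding fsg_vertices_def by auto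
  have "{(v, i), ({1..n}, j)} \<in> fsg_edges n" unfolding fsg_edges_def
    by (rule CollectI, rule exI[of _ v], rule exI[of _ "{1..n}"], rule exI[of _ i], rule exI[of _ j])
      (use assms(1) cV i j in simp)
  then show ?thesis by (intro bexI[of _ "{(v, i), ({1..n}, j)}"]) auto
qed

theorem corollary2p8:
  fixes n :: nat
  assumes "n \<ge> 1"
  shows "eulerian (fsg_vertices n) (fsg_edges n) edge_ends"
proof -
  have cV: "{1..n} \<in> fsg_vertices n" using assms unfolding fsg_vertices_def by auto
  have "\<exists>es vs. distinct es \<and> set es = fsg_edges n \<and> length vs = Suc (length es) \<and>
      set vs \<subseteq> fsg_vertices n \<and> hd vs = last vs \<and>
      (\<forall>k < length es. fst ` (es ! k) = {vs ! k, vs ! Suc k})"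
    by (rule euler_gen[OF fsg_finite_E _ _ _ cV])
      (use fsg_edge_card fsg_edge_ends fsg_sum_even fsg_hub in auto)
  then show ?thesis unfolding eulerian_def edge_ends_def by blast
qed

end
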